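(* Let $a,b$ be distinct real numbers and $x_0\in\mathbb{R}$. Let $\mu_n:=2-1/2^{n+1}$ for $n\in\mathbb{N}$. Define the sequence $(\lambda_n)_{n\in\mathbb{N}}$ as the concatenation of the finite blocks $B_0,B_1,B_2,\dots$, where $B_m:=(\mu_0,\mu_1,\dots,\mu_{2m},1)$ (of length $2m+2$); i.e. \[ (\lambda_n)_{n\in\mathbb{N}}=(\mu_0,1,\mu_0,\mu_1,\mu_2,1,\mu_0,\mu_1,\mu_2,\mu_3,\mu_4,1,\dots). \] Define $(x_n)_{n\in\mathbb{N}}$ by \[ x_{2n+1}:=(1-\lambda_{2n})x_{2n}+\lambda_{2n}a,\qquad x_{2n+2}:=(1-\lambda_{2n+1})x_{2n+1}+\lambda_{2n+1}b . \] Then $x_{n(n+1)}=b$ for every $n\ge1$, $|x_{n(n+1)-1}|\to+\infty$, and hence $(x_n)_{n\in\mathbb{N}}$ is unbounded with $\liminf_n|x_n|<+\infty=\limsup_n|x_n|$. *)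

theory Defs
  imports Complex_Main "HOL-Library.Extended_Real" "HOL-Library.Liminf_Limsup"
begin

definition mu :: "nat \<Rightarrow> real" where
  "mu n = 2 - 1 / 2 ^ (n + 1)"

definition blk :: "nat \<Rightarrow> real list" where
  "blk m = map mu [0..<2*m+1] @ [1]"

text \<open>lambda is the concatenation of the blocks B_0, B_1, ...; the first n+1 blocks
  have length at least n+1, so indexing the n-th entry there is correct.\<close>
definition lam :: "nat \<Rightarrow> real" where
  "lam n = concat (map blk [0..<n+1]) ! n"

fun xseq :: "real \<Rightarrow> real \<Rightarrow> real \<Rightarrow> nat \<Rightarrow> real" where
  "xseq a b x0 0 = x0"
| "xseq a b x0 (Suc n) =
     (1 - lam n) * xseq a b x0 n + lam n * (if even n then a else b)"

end

theory Submission
  imports Defs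
begin
lemma len_blk: "length (blk k) = 2*k+2" by (simp add: blk_def)
lemma len_cat: "length (concat (map blk [0..<m])) = m*(m+1)"
  by (induction m) (auto simp: len_blk)
lemma lam_blk: assumes "j \<le> 2*m+1" shows "lam (m*(m+1)+j) = blk m ! j"
proof -
  let ?N = "m*(m+1)+j"
  have "m < ?N + 1" by (cases m) auto
  then have "[0..<?N+1] = [0..<m] @ m # [Suc m..<?N+1]"
    by (metis less_imp_le_nat upt_add_eq_append upt_conv_Cons add_diff_inverse_nat not_less zero_le)
  then show ?thesis using assms by (simp add: lam_def nth_append len_cat len_blk)
qed
lemma lam_mu: "j \<le> 2*m \<Longrightarrow> lam (m*(m+1)+j) = mu j"
  using lam_blk[of j m] by (simp add: blk_def nth_append)
lemma lam_one: "lam (m*(m+1)+(2*m+1)) = 1"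
  using lam_blk[of "2*m+1" m] by (simp add: blk_def nth_append)
lemma step: "xseq a b x0 (m*(m+1)+j+1) = (1 - lam (m*(m+1)+j)) * xseq a b x0 (m*(m+1)+j) + lam (m*(m+1)+j) * (if even j then a else b)"
  by simp

lemma at_b: "xseq a b x0 ((m+1)*(m+2)) = b"
proof -
  have "(m+1)*(m+2) = m*(m+1)+(2*m+1)+1" by (simp add: algebra_simps)
  moreover have "xseq a b x0 (m*(m+1)+(2*m+1)+1) = b"
    using step[of a b x0 m "2*m+1"] lam_one[of m] by (simp del: xseq.simps)
  ultimately show ?thesis by metis
qed

lemma pow_bound: "real (i+1) * (1/2^(2*i+2)) \<le> 1"
proof -
  have "i + 1 \<le> (2::nat)^(2*i+2)"
    using less_exp[of "2*i+2"] by linarith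
  then have "real (i+1) \<le> 2^(2*i+2)" by (metis of_nat_le_iff of_nat_numeral of_nat_power)
  then show ?thesis by (simp add: field_simps)
qed

lemma growth:
  assumes "m \<ge> 1" "i \<le> m"
  shows "\<exists>w \<ge> real (i+1)/2. xseq a b x0 (m*(m+1)+2*i+1) - b = (a-b)*w"
  using assms(2)
proof (induction i)
  case 0
  obtain k where k: "m = k+1" using assms(1) by (metis add.commute le_Suc_ex)
  have xs: "xseq a b x0 (m*(m+1)) = b" using at_b[of a b x0 k] k by (simp add: algebra_simps)
  have "xseq a b x0 (m*(m+1)+0+1) = (1 - mu 0) * b + mu 0 * a"
    using step[of a b x0 m 0] lam_mu[of 0 m] xs by (simp del: xseq.simps)
  then have "xseq a b x0 (m*(m+1)+2*0+1) - b = (a-b)* mu 0" by (simp add: algebra_simps)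
  moreover have "mu 0 \<ge> real (0+1)/2" by (simp add: mu_def)
  ultimately show ?case by blast
next
  case (Suc i)
  then obtain w where w: "w \<ge> real (i+1)/2" "xseq a b x0 (m*(m+1)+2*i+1) - b = (a-b)*w" by auto
  define p :: real where "p = 1/2^(2*i+2)"
  have p0: "0 \<le> p" "p \<le> 1/4" unfolding p_def by (auto simp: field_simps)
  have pi: "real (i+1) * p \<le> 1" unfolding p_def by (rule pow_bound)
  have m1: "mu (2*i+1) = 2 - p" unfolding mu_def p_def by (simp add: field_simps)
  have m2: "mu (2*i+2) = 2 - p/2" unfolding mu_def p_def by (simp add: field_simps)
  have e1: "xseq a b x0 (m*(m+1)+(2*i+1)+1) = (1 - mu (2*i+1)) * xseq a b x0 (m*(m+1)+(2*i+1)) + mu (2*i+1) * b"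
    using step[of a b x0 m "2*i+1"] lam_mu[of "2*i+1" m] Suc.prems by (simp del: xseq.simps)
  have e2: "xseq a b x0 (m*(m+1)+(2*i+2)+1) = (1 - mu (2*i+2)) * xseq a b x0 (m*(m+1)+(2*i+2)) + mu (2*i+2) * a"
    using step[of a b x0 m "2*i+2"] lam_mu[of "2*i+2" m] Suc.prems by (simp del: xseq.simps)
  define w' where "w' = (1-p)*(1-p/2)*w + (2 - p/2)"
  have "xseq a b x0 (m*(m+1)+2*Suc i+1) - b = (a-b)*w'"
  proof -
    have A: "xseq a b x0 (m*(m+1)+(2*i+1)+1) - b = (p - 1) * (xseq a b x0 (m*(m+1)+2*i+1) - b)"
      using e1 unfolding m1 by (simp add: algebra_simps del: xseq.simps)
    have B: "xseq a b x0 (m*(m+1)+(2*i+2)+1) - b = (p/2 - 1) * (xseq a b x0 (m*(m+1)+(2*i+2)) - b) + (2 - p/2)*(a-b)"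
      using e2 unfolding m2 by (simp add: field_simps del: xseq.simps)
    have i1: "m*(m+1)+(2*i+1)+1 = m*(m+1)+(2*i+2)" by simp
    have i2: "m*(m+1)+2*Suc i+1 = m*(m+1)+(2*i+2)+1" by simp
    show ?thesis unfolding i2 B A[unfolded i1] w(2) w'_def by (simp add: field_simps)
  qed
  moreover have "w' \<ge> real (Suc i + 1)/2"
  proof -
    have q: "(1-p)*(1-p/2) \<ge> 1 - 3*p/2" using p0 by (simp add: algebra_simps)
    have q0: "(1-p)*(1-p/2) \<ge> 0" using p0 by simp
    have "(1-p)*(1-p/2)*w \<ge> (1-p)*(1-p/2)*(real (i+1)/2)" using w(1) q0 by (rule mult_left_mono)
    moreover have "(1-p)*(1-p/2)*(real (i+1)/2) \<ge> (1 - 3*p/2)*(real (i+1)/2)"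
      using q by (rule mult_right_mono) simp
    moreover have "(1 - 3*p/2)*(real (i+1)/2) = real (i+1)/2 - 3/4 * (real (i+1) * p)" by (simp add: algebra_simps)
    ultimately have "(1-p)*(1-p/2)*w \<ge> real (i+1)/2 - 3/4" using pi by linarith
    then have "w' \<ge> real (i+1)/2 - 3/4 + (2 - p/2)" unfolding w'_def by linarith
    then show ?thesis using p0 by (simp add: field_simps)
  qed
  ultimately show ?case by blast
qed

lemma lower:
  assumes "n \<ge> 2"
  shows "\<bar>xseq a b x0 (n*(n+1)-1)\<bar> \<ge> \<bar>a-b\<bar> * real n / 2 - \<bar>b\<bar>"
proof -
  define m where "m = n - 1"
  have m: "n = m+1" "m \<ge> 1" using assms unfolding m_def by auto
  obtain w where w: "w \<ge> real (m+1)/2" "xseq a b x0 (m*(m+1)+2*m+1) - b = (a-b)*w"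
    using growth[of m m a b x0] m(2) by auto
  have idx: "n*(n+1)-1 = m*(m+1)+2*m+1" using m by (simp add: algebra_simps)
  have w0: "\<bar>w\<bar> = w" using w(1) by simp
  have "real n / 2 \<le> w" using w(1) m(1) by simp
  then have "\<bar>a-b\<bar> * (real n / 2) \<le> \<bar>a-b\<bar> * w" by (rule mult_left_mono) simp
  then have "\<bar>a-b\<bar> * real n / 2 \<le> \<bar>a-b\<bar> * w" by simp
  also have "\<dots> = \<bar>xseq a b x0 (n*(n+1)-1) - b\<bar>" unfolding idx w(2) by (simp add: abs_mult w0)
  finally show ?thesis by linarith
qed

theorem mainTheorem7:
  fixes a b x0 :: real
  assumes "a \<noteq> b"
  shows "(\<forall>n\<ge>1. xseq a b x0 (n * (n + 1)) = b)
    \<and> filterlim (\<lambda>n. \<bar>xseq a b x0 (n * (n + 1) - 1)\<bar>) at_top sequentially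
    \<and> \<not> Bseq (xseq a b x0)
    \<and> liminf (\<lambda>n. ereal \<bar>xseq a b x0 n\<bar>) < \<infinity>
    \<and> limsup (\<lambda>n. ereal \<bar>xseq a b x0 n\<bar>) = \<infinity>"
proof -
  let ?X = "xseq a b x0"
  have P1: "\<forall>n\<ge>1. ?X (n * (n + 1)) = b"
  proof (intro allI impI)
    fix n :: nat assume "n \<ge> 1"
    then obtain k where "n = k+1" by (metis add.commute le_Suc_ex)
    then show "?X (n * (n + 1)) = b" using at_b[of a b x0 k] by simp
  qed
  have c: "\<bar>a-b\<bar>/2 > 0" using assms by simp
  have L: "filterlim (\<lambda>n. (- \<bar>b\<bar>) + \<bar>a-b\<bar>/2 * real n) at_top sequentially"
    by (rule filterlim_tendsto_add_at_top[OF tendsto_const]) (rule filterlim_tendsto_pos_mult_at_top[OF tendsto_const c filterlim_real_sequentially])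
  have P2: "filterlim (\<lambda>n. \<bar>?X (n * (n + 1) - 1)\<bar>) at_top sequentially"
  proof (rule filterlim_at_top_mono[OF L])
    show "\<forall>\<^sub>F n in sequentially. (- \<bar>b\<bar>) + \<bar>a-b\<bar>/2 * real n \<le> \<bar>?X (n * (n + 1) - 1)\<bar>"
      unfolding eventually_sequentially using lower[of _ a b x0] by (intro exI[of _ 2]) auto
  qed
  have P3: "\<not> Bseq ?X"
  proof
    assume "Bseq ?X"
    then obtain K where K: "\<forall>n. norm (?X n) \<le> K" unfolding Bseq_def by auto
    from P2 have "\<forall>\<^sub>F n in sequentially. K + 1 \<le> \<bar>?X (n * (n + 1) - 1)\<bar>"
      unfolding filterlim_at_top by auto
    then obtain n where "K + 1 \<le> \<bar>?X (n * (n + 1) - 1)\<bar>" unfolding eventually_sequentially by auto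
    with K[rule_format, of "n * (n + 1) - 1"] show False by simp
  qed
  define r :: "nat \<Rightarrow> nat" where "r n = (n+1)*(n+2)" for n
  have sr: "strict_mono r" unfolding r_def strict_mono_Suc_iff by simp
  have "liminf (\<lambda>n. ereal \<bar>?X n\<bar>) \<le> liminf ((\<lambda>n. ereal \<bar>?X n\<bar>) \<circ> r)"
    by (rule liminf_subseq_mono[OF sr])
  also have "(\<lambda>n. ereal \<bar>?X n\<bar>) \<circ> r = (\<lambda>n. ereal \<bar>b\<bar>)"
    unfolding r_def using at_b[of a b x0] by (auto simp: comp_def)
  also have "liminf (\<lambda>n. ereal \<bar>b\<bar>) = ereal \<bar>b\<bar>" by (simp add: Liminf_const)
  finally have P4: "liminf (\<lambda>n. ereal \<bar>?X n\<bar>) < \<infinity>" by (rule le_less_trans) simp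
  define q :: "nat \<Rightarrow> nat" where "q n = n*(n+1) - 1" for n
  have sq: "strict_mono q" unfolding q_def
  unfolding strict_mono_Suc_iff
  proof
    fix n :: nat show "n * (n + 1) - 1 < Suc n * (Suc n + 1) - 1" by (cases n) auto
  qed
  have "((\<lambda>n. ereal \<bar>?X n\<bar>) \<circ> q) \<longlonglongrightarrow> \<infinity>"
    using P2 unfolding q_def comp_def tendsto_PInfty_eq_at_top .
  then have "liminf ((\<lambda>n. ereal \<bar>?X n\<bar>) \<circ> q) = \<infinity>" using liminf_PInfty by blast
  then have "limsup ((\<lambda>n. ereal \<bar>?X n\<bar>) \<circ> q) = \<infinity>"
    using Liminf_le_Limsup[of sequentially "(\<lambda>n. ereal \<bar>?X n\<bar>) \<circ> q"] by (simp add: ereal_infty_less_eq)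
  then have P5: "limsup (\<lambda>n. ereal \<bar>?X n\<bar>) = \<infinity>"
    using limsup_subseq_mono[OF sq, of "\<lambda>n. ereal \<bar>?X n\<bar>"]
    by (simp add: ereal_infty_less_eq)
  show ?thesis using P1 P2 P3 P4 P5 by blast
qed

end
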